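(* Let $\mathbb{K}$ be a field, $R=\mathbb{K}\langle x,y\rangle/(xy-1)$, $I=\langle 1-yx\rangle$ the socle of $R$, and $S_n=Rf_n$ with $f_n=y^{n-1}x^{n-1}-y^nx^n$ for $n\ge1$. If $H$ is a left ideal of $R$, then either $H$ is semisimple (and so contained in $I$), or there is a unique monic polynomial $p(x)\in H\cap\mathbb{K}[x]$ of minimal degree (among nonzero polynomials in $x$ lying in $H$), and $H=\Sigma(H)\oplus Rp(x)$ for a uniquely determined left submodule $\Sigma(H)\subseteq S_1\oplus\cdots\oplus S_{\deg(p)}$.
   Context: $I=\bigoplus_{n\ge1}S_n$ as left modules, each $S_n$ being simple and isomorphic to $S_1$. *)

theory Defs
  imports "HOL-Library.Poly_Mapping" "HOL-Computational_Algebra.Polynomial"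
begin

text \<open>Concrete model of the Jacobson algebra R = K<x,y>/(xy - 1).
  R has K-basis the monomials y^i x^j (i,j \<ge> 0) (normal forms modulo xy = 1);
  the monomial y^i x^j is encoded as the key (i,j).  Addition is the pointwise one
  of poly_mapping; multiplication is the bilinear extension of the bicyclic
  monoid product: (y^i x^j)(y^k x^l) = y^i x^(j-k+l) if k \<le> j, and
  y^(i+k-j) x^l otherwise.\<close>

definition bmul :: "nat \<times> nat \<Rightarrow> nat \<times> nat \<Rightarrow> nat \<times> nat" where
  "bmul p q = (case p of (i, j) \<Rightarrow> case q of (k, l) \<Rightarrow>
      if k \<le> j then (i, j - k + l) else (i + k - j, l))"

definition jmult :: "((nat \<times> nat) \<Rightarrow>\<^sub>0 'k::field) \<Rightarrow> ((nat \<times> nat) \<Rightarrow>\<^sub>0 'k) \<Rightarrow> ((nat \<times> nat) \<Rightarrow>\<^sub>0 'k)" where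
  "jmult f g = (\<Sum>p\<in>Poly_Mapping.keys f. \<Sum>q\<in>Poly_Mapping.keys g.
      Poly_Mapping.single (bmul p q) (Poly_Mapping.lookup f p * Poly_Mapping.lookup g q))"

definition mon :: "nat \<Rightarrow> nat \<Rightarrow> ((nat \<times> nat) \<Rightarrow>\<^sub>0 'k::field)" where
  "mon i j = Poly_Mapping.single (i, j) 1"

definition polyx :: "'k::field poly \<Rightarrow> ((nat \<times> nat) \<Rightarrow>\<^sub>0 'k)" where
  "polyx p = (\<Sum>j\<le>degree p. Poly_Mapping.single (0, j) (coeff p j))"

definition lideal :: "((nat \<times> nat) \<Rightarrow>\<^sub>0 'k::field) set \<Rightarrow> bool" where
  "lideal H \<longleftrightarrow> 0 \<in> H \<and> (\<forall>a\<in>H. \<forall>b\<in>H. a + b \<in> H) \<and> (\<forall>r. \<forall>a\<in>H. jmult r a \<in> H)"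

definition tideal :: "((nat \<times> nat) \<Rightarrow>\<^sub>0 'k::field) set \<Rightarrow> bool" where
  "tideal J \<longleftrightarrow> lideal J \<and> (\<forall>r. \<forall>a\<in>J. jmult a r \<in> J)"

definition simple_lideal :: "((nat \<times> nat) \<Rightarrow>\<^sub>0 'k::field) set \<Rightarrow> bool" where
  "simple_lideal S \<longleftrightarrow> lideal S \<and> S \<noteq> {0} \<and>
     (\<forall>T. lideal T \<and> T \<subseteq> S \<longrightarrow> T = {0} \<or> T = S)"

definition semisimple :: "((nat \<times> nat) \<Rightarrow>\<^sub>0 'k::field) set \<Rightarrow> bool" where
  "semisimple H \<longleftrightarrow> lideal H \<and>
     (\<forall>h\<in>H. \<exists>n (g :: nat \<Rightarrow> (nat \<times> nat) \<Rightarrow>\<^sub>0 'k) (S :: nat \<Rightarrow> ((nat \<times> nat) \<Rightarrow>\<^sub>0 'k) set).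
        (\<forall>i<n. simple_lideal (S i) \<and> S i \<subseteq> H \<and> g i \<in> S i) \<and> h = (\<Sum>i<n. g i))"

definition lprinc :: "((nat \<times> nat) \<Rightarrow>\<^sub>0 'k::field) \<Rightarrow> ((nat \<times> nat) \<Rightarrow>\<^sub>0 'k) set" where
  "lprinc a = {jmult r a | r. True}"

definition fn :: "nat \<Rightarrow> ((nat \<times> nat) \<Rightarrow>\<^sub>0 'k::field)" where
  "fn n = mon (n - 1) (n - 1) - mon n n"

definition Sn :: "nat \<Rightarrow> ((nat \<times> nat) \<Rightarrow>\<^sub>0 'k::field) set" where
  "Sn n = lprinc (fn n)"

definition Ssum :: "nat \<Rightarrow> ((nat \<times> nat) \<Rightarrow>\<^sub>0 'k::field) set" where
  "Ssum d = {(\<Sum>n\<in>{1..d}. s n) | s. \<forall>n\<in>{1..d}. s n \<in> Sn n}"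

definition socle :: "((nat \<times> nat) \<Rightarrow>\<^sub>0 'k::field) set" where
  "socle = \<Inter>{J. tideal J \<and> mon 0 0 - mon 1 1 \<in> J}"

definition idirect :: "((nat \<times> nat) \<Rightarrow>\<^sub>0 'k::field) set \<Rightarrow> _ set \<Rightarrow> _ set \<Rightarrow> bool" where
  "idirect H A B \<longleftrightarrow> H = {a + b | a b. a \<in> A \<and> b \<in> B} \<and> A \<inter> B = {0}"

definition minpoly_in :: "((nat \<times> nat) \<Rightarrow>\<^sub>0 'k::field) set \<Rightarrow> 'k poly \<Rightarrow> bool" where
  "minpoly_in H p \<longleftrightarrow> p \<noteq> 0 \<and> lead_coeff p = 1 \<and> polyx p \<in> H \<and>
     (\<forall>q. q \<noteq> 0 \<and> polyx q \<in> H \<longrightarrow> degree p \<le> degree q)"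

end

theory Submission
  imports Defs
begin


type_synonym 'k R = "(nat \<times> nat) \<Rightarrow>\<^sub>0 'k"

lemma lookup_sum_single:
  "Poly_Mapping.lookup (\<Sum>x\<in>A. Poly_Mapping.single (f x) (v x)) y = (\<Sum>x\<in>A. if f x = y then v x else 0)"
  by (simp add: lookup_sum lookup_single when_def)

lemma jmult_gen:
  assumes "finite A" "Poly_Mapping.keys f \<subseteq> A" "finite B" "Poly_Mapping.keys g \<subseteq> B"
  shows "jmult f g = (\<Sum>p\<in>A. \<Sum>q\<in>B. Poly_Mapping.single (bmul p q) (Poly_Mapping.lookup f p * Poly_Mapping.lookup g q))"
proof -
  have "jmult f g = (\<Sum>p\<in>Poly_Mapping.keys f. \<Sum>q\<in>B. Poly_Mapping.single (bmul p q) (Poly_Mapping.lookup f p * Poly_Mapping.lookup g q))"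
    unfolding jmult_def
    by (rule sum.cong[OF refl], rule sum.mono_neutral_left) (use assms in \<open>auto simp: in_keys_iff\<close>)
  also have "\<dots> = (\<Sum>p\<in>A. \<Sum>q\<in>B. Poly_Mapping.single (bmul p q) (Poly_Mapping.lookup f p * Poly_Mapping.lookup g q))"
    by (rule sum.mono_neutral_left) (use assms in \<open>auto simp: in_keys_iff\<close>)
  finally show ?thesis .
qed

lemma jmult_add_left: "jmult (f + f') g = jmult f g + jmult f' g"
proof -
  let ?A = "Poly_Mapping.keys f \<union> Poly_Mapping.keys f'"
  have k: "Poly_Mapping.keys (f + f') \<subseteq> ?A" by (rule keys_add)
  show ?thesis
    apply (subst (1 2 3) jmult_gen[where A = ?A and B = "Poly_Mapping.keys g"])
    using k by (auto simp: lookup_add distrib_right single_add sum.distrib)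
qed

lemma jmult_add_right: "jmult f (g + g') = jmult f g + jmult f g'"
proof -
  let ?B = "Poly_Mapping.keys g \<union> Poly_Mapping.keys g'"
  have k: "Poly_Mapping.keys (g + g') \<subseteq> ?B" by (rule keys_add)
  show ?thesis
    apply (subst (1 2 3) jmult_gen[where B = ?B and A = "Poly_Mapping.keys f"])
    using k by (auto simp: lookup_add distrib_left single_add sum.distrib)
qed

lemma jmult_zero_left[simp]: "jmult 0 g = 0" by (simp add: jmult_def)
lemma jmult_zero_right[simp]: "jmult f 0 = 0" by (simp add: jmult_def)

lemma jmult_uminus_left: "jmult (- f) g = - jmult f g"
  by (metis add_eq_0_iff2 jmult_add_left jmult_zero_left neg_eq_iff_add_eq_0)
lemma jmult_uminus_right: "jmult f (- g) = - jmult f g"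
  by (metis add_eq_0_iff2 jmult_add_right jmult_zero_right neg_eq_iff_add_eq_0)
lemma jmult_diff_left: "jmult (f - f') g = jmult f g - jmult f' g"
  by (metis diff_conv_add_uminus jmult_add_left jmult_uminus_left)
lemma jmult_diff_right: "jmult f (g - g') = jmult f g - jmult f g'"
  by (metis diff_conv_add_uminus jmult_add_right jmult_uminus_right)

lemma jmult_sum_left: "jmult (\<Sum>i\<in>I. f i) g = (\<Sum>i\<in>I. jmult (f i) g)"
  by (induction I rule: infinite_finite_induct) (auto simp: jmult_add_left)
lemma jmult_sum_right: "jmult g (\<Sum>i\<in>I. f i) = (\<Sum>i\<in>I. jmult g (f i))"
  by (induction I rule: infinite_finite_induct) (auto simp: jmult_add_right)

lemma jmult_single_single:
  "jmult (Poly_Mapping.single p a) (Poly_Mapping.single q b) = Poly_Mapping.single (bmul p q) (a * b)"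
  by (subst jmult_gen[where A = "{p}" and B = "{q}"]) auto

lemma jmult_single_left:
  "jmult (Poly_Mapping.single p a) g = (\<Sum>q\<in>Poly_Mapping.keys g. Poly_Mapping.single (bmul p q) (a * Poly_Mapping.lookup g q))"
  by (subst jmult_gen[where A = "{p}" and B = "Poly_Mapping.keys g"]) auto

lemma jmult_single_right:
  "jmult f (Poly_Mapping.single q b) = (\<Sum>p\<in>Poly_Mapping.keys f. Poly_Mapping.single (bmul p q) (Poly_Mapping.lookup f p * b))"
  by (subst jmult_gen[where B = "{q}" and A = "Poly_Mapping.keys f"]) auto

lemma pm_expand: "f = (\<Sum>p\<in>Poly_Mapping.keys f. Poly_Mapping.single p (Poly_Mapping.lookup f p))"
  by (rule poly_mapping_eqI) (auto simp: lookup_sum_single in_keys_iff sum.delta)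

lemma bmul_assoc: "bmul (bmul p q) r = bmul p (bmul q r)"
  by (cases p; cases q; cases r) (auto simp: bmul_def)

lemma jmult_sums:
  "jmult (\<Sum>p\<in>A. Poly_Mapping.single p (a p)) (\<Sum>q\<in>B. Poly_Mapping.single q (b q))
   = (\<Sum>p\<in>A. \<Sum>q\<in>B. Poly_Mapping.single (bmul p q) (a p * b q))"
  by (simp only: jmult_sum_left) (simp add: jmult_sum_right jmult_single_single)

lemma jmult_assoc: "jmult (jmult f g) h = jmult f (jmult g h)"
proof -
  let ?F = "Poly_Mapping.keys f" and ?G = "Poly_Mapping.keys g" and ?H = "Poly_Mapping.keys h"
  let ?f = "Poly_Mapping.lookup f" and ?g = "Poly_Mapping.lookup g" and ?h = "Poly_Mapping.lookup h"
  have "jmult (jmult f g) h = jmult (\<Sum>p\<in>?F. \<Sum>q\<in>?G. Poly_Mapping.single (bmul p q) (?f p * ?g q))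
       (\<Sum>r\<in>?H. Poly_Mapping.single r (?h r))"
    by (simp add: jmult_def flip: pm_expand)
  also have "\<dots> = (\<Sum>p\<in>?F. \<Sum>q\<in>?G. \<Sum>r\<in>?H. Poly_Mapping.single (bmul (bmul p q) r) (?f p * ?g q * ?h r))"
    by (simp only: jmult_sum_left) (simp add: jmult_sum_right jmult_single_single)
  also have "\<dots> = (\<Sum>p\<in>?F. \<Sum>q\<in>?G. \<Sum>r\<in>?H. Poly_Mapping.single (bmul p (bmul q r)) (?f p * (?g q * ?h r)))"
    by (simp add: bmul_assoc mult.assoc)
  also have "\<dots> = jmult (\<Sum>p\<in>?F. Poly_Mapping.single p (?f p)) (\<Sum>q\<in>?G. \<Sum>r\<in>?H. Poly_Mapping.single (bmul q r) (?g q * ?h r))"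
    by (simp only: jmult_sum_left) (simp add: jmult_sum_right jmult_single_single)
  also have "\<dots> = jmult f (jmult g h)"
    by (simp add: jmult_def flip: pm_expand)
  finally show ?thesis .
qed


definition sc :: "'k::field \<Rightarrow> 'k R \<Rightarrow> 'k R" where
  "sc c a = jmult (Poly_Mapping.single (0,0) c) a"

lemma bmul_00[simp]: "bmul (0,0) q = q"
  by (cases q) (simp add: bmul_def)

lemma lookup_sc[simp]: "Poly_Mapping.lookup (sc c a) x = c * Poly_Mapping.lookup a x"
  unfolding sc_def jmult_single_left lookup_sum_single
  by (cases "x \<in> Poly_Mapping.keys a") (auto simp: sum.delta in_keys_iff)

lemma sc_single[simp]: "sc c (Poly_Mapping.single q b) = Poly_Mapping.single q (c*b)"
  by (simp add: sc_def jmult_single_single)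

lemma sc_one[simp]: "sc 1 a = a"
  by (rule poly_mapping_eqI) simp

lemma jmult_mon00[simp]: "jmult (mon 0 0) a = a"
  using sc_one unfolding sc_def mon_def .

lemma sc_minus_one: "sc (-1) a = - a"
  by (rule poly_mapping_eqI) simp

lemma sc_add: "sc c (a + b) = sc c a + sc c b"
  by (simp add: sc_def jmult_add_right)

lemma sc_diff: "sc c (a - b) = sc c a - sc c b"
  by (simp add: sc_def jmult_diff_right)

lemma sc_zero[simp]: "sc c 0 = 0" by (simp add: sc_def)
lemma sc_zero_left[simp]: "sc 0 a = 0" by (rule poly_mapping_eqI) simp

lemma sc_sc: "sc c (sc d a) = sc (c*d) a"
  by (rule poly_mapping_eqI) simp

lemma jmult_sc_left: "jmult (sc c a) b = sc c (jmult a b)"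
  by (simp add: sc_def jmult_assoc)

lemma jmult_sc_right: "jmult a (sc c b) = sc c (jmult a b)"
proof -
  have "jmult a (sc c b) = jmult (jmult a (Poly_Mapping.single (0,0) c)) b"
    by (simp add: sc_def jmult_assoc)
  also have "jmult a (Poly_Mapping.single (0,0) c) = jmult (Poly_Mapping.single (0,0) c) a"
  proof (rule poly_mapping_eqI)
    fix x
    show "Poly_Mapping.lookup (jmult a (Poly_Mapping.single (0, 0) c)) x =
          Poly_Mapping.lookup (jmult (Poly_Mapping.single (0, 0) c) a) x"
      unfolding jmult_single_right jmult_single_left lookup_sum_single
      by (rule sum.cong) (auto simp: bmul_def split: prod.splits)
  qed
  finally show ?thesis by (simp add: sc_def jmult_assoc)
qed

lemma sc_sum: "sc c (\<Sum>i\<in>I. f i) = (\<Sum>i\<in>I. sc c (f i))"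
  by (simp add: sc_def jmult_sum_right)

definition e :: "nat \<Rightarrow> nat \<Rightarrow> 'k::field R" where
  "e i j = mon i j - mon (Suc i) (Suc j)"

definition diag :: "nat \<times> nat \<Rightarrow> int" where
  "diag q = int (snd q) - int (fst q)"

definition D :: "int \<Rightarrow> 'k::field R \<Rightarrow> 'k" where
  "D k a = (\<Sum>q\<in>Poly_Mapping.keys a. if diag q = k then Poly_Mapping.lookup a q else 0)"

lemma D_gen: "finite A \<Longrightarrow> Poly_Mapping.keys a \<subseteq> A \<Longrightarrow>
   D k a = (\<Sum>q\<in>A. if diag q = k then Poly_Mapping.lookup a q else 0)"
  unfolding D_def by (rule sum.mono_neutral_left) (auto simp: in_keys_iff)

lemma D_add: "D k (a + b) = D k a + D k b"
proof -
  let ?A = "Poly_Mapping.keys a \<union> Poly_Mapping.keys b"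
  show ?thesis
    apply (subst (1 2 3) D_gen[where A = ?A])
    using keys_add[of a b] by (auto simp: lookup_add sum.distrib[symmetric] intro!: sum.cong)
qed

lemma D_zero[simp]: "D k 0 = 0" by (simp add: D_def)

lemma D_uminus: "D k (- a) = - D k a"
  by (metis D_add D_zero add_eq_0_iff2 neg_eq_iff_add_eq_0)

lemma D_diff: "D k (a - b) = D k a - D k b"
  by (metis D_add D_uminus diff_conv_add_uminus)

lemma D_sum: "D k (\<Sum>i\<in>I. f i) = (\<Sum>i\<in>I. D k (f i))"
  by (induction I rule: infinite_finite_induct) (auto simp: D_add)

lemma D_single: "D k (Poly_Mapping.single q c) = (if diag q = k then c else 0)"
  by (subst D_gen[where A = "{q}"]) auto

lemma D_sum_single: "D k (\<Sum>x\<in>A. Poly_Mapping.single (f x) (v x)) = (\<Sum>x\<in>A. if diag (f x) = k then v x else 0)"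
  by (simp add: D_sum D_single)

lemma D_sc: "D k (sc c a) = c * D k a"
  unfolding D_def
  by (rule trans[OF sum.mono_neutral_left[where T = "Poly_Mapping.keys a"]])
     (auto simp: in_keys_iff sum_distrib_left intro!: sum.cong)

definition Iset :: "'k::field R set" where
  "Iset = {a. \<forall>k. D k a = 0}"

definition Qs :: "nat \<Rightarrow> 'k::field R set" where
  "Qs d = {a \<in> Iset. \<forall>q\<in>Poly_Mapping.keys a. snd q \<le> d}"

lemma Iset_add: "a \<in> Iset \<Longrightarrow> b \<in> Iset \<Longrightarrow> a + b \<in> Iset"
  by (simp add: Iset_def D_add)
lemma Iset_diff: "a \<in> Iset \<Longrightarrow> b \<in> Iset \<Longrightarrow> a - b \<in> Iset"
  by (simp add: Iset_def D_diff)
lemma Iset_sc: "a \<in> Iset \<Longrightarrow> sc c a \<in> Iset"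
  by (simp add: Iset_def D_sc)
lemma Iset_zero[simp]: "0 \<in> Iset"
  by (simp add: Iset_def)

lemma Qs_add: "a \<in> Qs d \<Longrightarrow> b \<in> Qs d \<Longrightarrow> a + b \<in> Qs d"
  using keys_add[of a b] by (auto simp: Qs_def Iset_add)
lemma Qs_diff: "a \<in> Qs d \<Longrightarrow> b \<in> Qs d \<Longrightarrow> a - b \<in> Qs d"
  using keys_diff[of a b] by (auto simp: Qs_def Iset_diff)
lemma Qs_zero[simp]: "0 \<in> Qs d"
  by (simp add: Qs_def)
lemma Qs_sum: "(\<And>i. i \<in> I \<Longrightarrow> f i \<in> Qs d) \<Longrightarrow> (\<Sum>i\<in>I. f i) \<in> Qs d"
  by (induction I rule: infinite_finite_induct) (auto simp: Qs_add)
lemma Qs_mono: "a \<in> Qs d \<Longrightarrow> d \<le> d' \<Longrightarrow> a \<in> Qs d'"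
  by (auto simp: Qs_def)

definition rowb :: "'k::field R \<Rightarrow> nat" where
  "rowb h = Max (insert 0 (fst ` Poly_Mapping.keys h))"

lemma rowb: "q \<in> Poly_Mapping.keys h \<Longrightarrow> fst q \<le> rowb h"
  unfolding rowb_def by (rule Max_ge) auto

lemma jmult_mon_left:
  assumes "\<forall>q\<in>Poly_Mapping.keys h. fst q \<le> b"
  shows "jmult (mon a b) h = (\<Sum>q\<in>Poly_Mapping.keys h. Poly_Mapping.single (a, b - fst q + snd q) (Poly_Mapping.lookup h q))"
  unfolding mon_def jmult_single_left
  by (rule sum.cong) (use assms in \<open>auto simp: bmul_def split: prod.splits\<close>)

lemma D_mon_left:
  assumes "\<forall>q\<in>Poly_Mapping.keys h. fst q \<le> b"
  shows "D k (jmult (mon a b) h) = D (k - int b + int a) h"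
proof -
  have "D k (jmult (mon a b) h) = (\<Sum>q\<in>Poly_Mapping.keys h. if diag (a, b - fst q + snd q) = k then Poly_Mapping.lookup h q else 0)"
    by (simp only: jmult_mon_left[OF assms] D_sum_single)
  also have "\<dots> = D (k - int b + int a) h"
    unfolding D_def by (rule sum.cong) (use assms in \<open>auto simp: diag_def\<close>)
  finally show ?thesis .
qed

lemma lookup_xN:
  assumes "\<forall>q\<in>Poly_Mapping.keys h. fst q \<le> N"
  shows "Poly_Mapping.lookup (jmult (mon 0 N) h) (i,j) = (if i = 0 then D (int j - int N) h else 0)"
  unfolding jmult_mon_left[OF assms] lookup_sum_single D_def
  by (auto intro!: sum.cong simp: diag_def) (use assms in force)+

lemma xN_Iset:
  assumes "\<forall>q\<in>Poly_Mapping.keys h. fst q \<le> N" "h \<in> Iset"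
  shows "jmult (mon 0 N) h = 0"
  by (rule poly_mapping_eqI) (use assms in \<open>auto simp: lookup_xN Iset_def\<close>)

lemma xN_row0:
  assumes "\<forall>q\<in>Poly_Mapping.keys h. fst q \<le> N" "q \<in> Poly_Mapping.keys (jmult (mon 0 N) h)"
  shows "fst q = 0"
  using assms(2) lookup_xN[OF assms(1), of "fst q" "snd q"] by (auto simp: in_keys_iff split: if_splits)


lemma lookup_polyx: "Poly_Mapping.lookup (polyx p) (i,j) = (if i = 0 then coeff p j else 0)"
  unfolding polyx_def lookup_sum_single
  by (auto simp: sum.delta coeff_eq_0 intro: sum.neutral)

lemma lookup_polyx': "Poly_Mapping.lookup (polyx p) q = (if fst q = 0 then coeff p (snd q) else 0)"
  by (cases q) (simp add: lookup_polyx)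

lemma polyx_add: "polyx (a + b) = polyx a + polyx b"
  by (rule poly_mapping_eqI) (simp add: lookup_polyx' lookup_add)
lemma polyx_0[simp]: "polyx 0 = 0"
  by (rule poly_mapping_eqI) (simp add: lookup_polyx')
lemma polyx_diff: "polyx (a - b) = polyx a - polyx b"
  by (rule poly_mapping_eqI) (simp add: lookup_polyx' lookup_minus)
lemma polyx_smult: "polyx (smult c a) = sc c (polyx a)"
  by (rule poly_mapping_eqI) (simp add: lookup_polyx')
lemma polyx_sum: "polyx (\<Sum>i\<in>I. f i) = (\<Sum>i\<in>I. polyx (f i))"
  by (induction I rule: infinite_finite_induct) (auto simp: polyx_add)
lemma polyx_eq_0: "polyx a = 0 \<longleftrightarrow> a = 0"
proof
  assume "polyx a = 0"
  then have "\<forall>j. coeff a j = 0" by (metis lookup_polyx lookup_zero)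
  then show "a = 0" by (simp add: poly_eq_iff)
qed simp

lemma jmult_single0_polyx:
  "jmult (Poly_Mapping.single (0,m) c) (polyx b) = polyx (monom c m * b)"
proof (rule poly_mapping_eqI)
  fix q :: "nat \<times> nat"
  obtain i j where q: "q = (i,j)" by (cases q)
  have "jmult (Poly_Mapping.single (0,m) c) (polyx b) =
     (\<Sum>n\<le>degree b. Poly_Mapping.single (0, m + n) (c * coeff b n))"
    unfolding polyx_def jmult_sum_right jmult_single_single by (simp add: bmul_def)
  then have "Poly_Mapping.lookup (jmult (Poly_Mapping.single (0,m) c) (polyx b)) q =
     (\<Sum>n\<le>degree b. if (0, m + n) = (i,j) then c * coeff b n else 0)"
    by (simp add: lookup_sum_single q)
  also have "\<dots> = (if i = 0 \<and> m \<le> j then c * coeff b (j - m) else 0)"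
  proof (cases "i = 0 \<and> m \<le> j")
    case True
    then have "(\<Sum>n\<le>degree b. if (0, m + n) = (i,j) then c * coeff b n else 0) =
       (\<Sum>n\<le>degree b. if n = j - m then c * coeff b n else 0)"
      by (intro sum.cong) auto
    also have "\<dots> = c * coeff b (j - m)" by (auto simp: sum.delta coeff_eq_0)
    finally show ?thesis using True by simp
  qed (auto intro: sum.neutral)
  also have "\<dots> = Poly_Mapping.lookup (polyx (monom c m * b)) q"
    by (simp add: q lookup_polyx coeff_monom_mult)
  finally show "Poly_Mapping.lookup (jmult (Poly_Mapping.single (0,m) c) (polyx b)) q = Poly_Mapping.lookup (polyx (monom c m * b)) q" .
qed

lemma polyx_mult: "polyx (a * b) = jmult (polyx a) (polyx b)"
proof -
  have "polyx (a * b) = polyx ((\<Sum>i\<le>degree a. monom (coeff a i) i) * b)"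
    by (simp add: poly_as_sum_of_monoms)
  also have "\<dots> = (\<Sum>i\<le>degree a. jmult (Poly_Mapping.single (0,i) (coeff a i)) (polyx b))"
    by (simp add: sum_distrib_right polyx_sum jmult_single0_polyx)
  also have "\<dots> = jmult (polyx a) (polyx b)"
    by (simp add: polyx_def jmult_sum_left)
  finally show ?thesis .
qed

lemma D_polyx: "D (int n) (polyx v) = coeff v n"
  unfolding polyx_def D_sum_single
  by (auto simp: diag_def sum.delta coeff_eq_0 cong: if_cong)

lemma row0_polyx:
  assumes "\<forall>q\<in>Poly_Mapping.keys a. fst q = 0"
  shows "a = polyx (\<Sum>q\<in>Poly_Mapping.keys a. monom (Poly_Mapping.lookup a q) (snd q))"
proof (rule poly_mapping_eqI)
  fix q :: "nat \<times> nat"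
  obtain i j where q: "q = (i,j)" by (cases q)
  show "Poly_Mapping.lookup a q = Poly_Mapping.lookup (polyx (\<Sum>q\<in>Poly_Mapping.keys a. monom (Poly_Mapping.lookup a q) (snd q))) q"
  proof (cases "i = 0")
    case True
    have "(\<Sum>x\<in>Poly_Mapping.keys a. if snd x = j then Poly_Mapping.lookup a x else 0) =
          (\<Sum>x\<in>Poly_Mapping.keys a. if x = (0,j) then Poly_Mapping.lookup a x else 0)"
      by (rule sum.cong) (use assms in auto)
    also have "\<dots> = Poly_Mapping.lookup a (0,j)"
      by (auto simp: sum.delta in_keys_iff)
    finally show ?thesis
      by (simp add: q True lookup_polyx coeff_sum coeff_monom eq_commute[of "snd _"])
  next
    case False
    then have "q \<notin> Poly_Mapping.keys a" using assms q by auto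
    then show ?thesis by (simp add: q False lookup_polyx in_keys_iff)
  qed
qed


lemma e_single: "e i j = Poly_Mapping.single (i,j) 1 - Poly_Mapping.single (Suc i, Suc j) 1"
  by (simp add: e_def mon_def)

lemma single_pair_Qs:
  assumes "P = P' \<or> (diag P = diag P' \<and> snd P \<le> d \<and> snd P' \<le> d)"
  shows "Poly_Mapping.single P c - Poly_Mapping.single P' c \<in> Qs d"
proof (cases "P = P'")
  case False
  with assms have a: "diag P = diag P'" "snd P \<le> d" "snd P' \<le> d" by auto
  have "Poly_Mapping.keys (Poly_Mapping.single P c - Poly_Mapping.single P' c) \<subseteq> {P, P'}"
    using keys_diff[of "Poly_Mapping.single P c" "Poly_Mapping.single P' c"]
    by (auto split: if_splits)
  then show ?thesis using a by (auto simp: Qs_def Iset_def D_diff D_single)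
qed simp

lemma e_Qs: "e i j \<in> Qs (Suc j)"
  unfolding e_single by (rule single_pair_Qs) (auto simp: diag_def)

lemma jmult_e_Qs: "jmult r (e k k) \<in> Qs (Suc k)"
proof -
  have "jmult r (e k k) = (\<Sum>p\<in>Poly_Mapping.keys r. Poly_Mapping.single (bmul p (k,k)) (Poly_Mapping.lookup r p)
      - Poly_Mapping.single (bmul p (Suc k, Suc k)) (Poly_Mapping.lookup r p))"
    by (simp add: e_single jmult_diff_right jmult_single_right sum_subtractf)
  also have "\<dots> \<in> Qs (Suc k)"
    by (rule Qs_sum, rule single_pair_Qs) (auto simp: bmul_def diag_def split: prod.splits)
  finally show ?thesis .
qed

lemma lprinc_zero: "0 \<in> lprinc a"
  unfolding lprinc_def by (metis (mono_tags) CollectI jmult_zero_left)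
lemma lprinc_self: "a \<in> lprinc a"
  unfolding lprinc_def by (metis (mono_tags) CollectI jmult_mon00)
lemma lprinc_add: "u \<in> lprinc a \<Longrightarrow> v \<in> lprinc a \<Longrightarrow> u + v \<in> lprinc a"
  unfolding lprinc_def by (auto simp flip: jmult_add_left)
lemma lprinc_mult: "u \<in> lprinc a \<Longrightarrow> jmult r u \<in> lprinc a"
  unfolding lprinc_def by (auto simp flip: jmult_assoc)
lemma lprinc_lideal: "lideal (lprinc a)"
  by (simp add: lideal_def lprinc_zero lprinc_add lprinc_mult)

lemma fn_e: "n \<ge> 1 \<Longrightarrow> fn n = e (n - 1) (n - 1)"
  by (simp add: fn_def e_def)

lemma Sn_Qs: "n \<ge> 1 \<Longrightarrow> u \<in> Sn n \<Longrightarrow> u \<in> Qs n"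
  unfolding Sn_def lprinc_def using jmult_e_Qs[of _ "n - 1"] by (auto simp: fn_e)

lemma Ssum_Qs: "u \<in> Ssum d \<Longrightarrow> u \<in> Qs d"
proof -
  assume "u \<in> Ssum d"
  then obtain s where s: "u = (\<Sum>n\<in>{1..d}. s n)" "\<forall>n\<in>{1..d}. s n \<in> Sn n"
    unfolding Ssum_def by blast
  have "\<And>n. n \<in> {1..d} \<Longrightarrow> s n \<in> Qs d"
  proof -
    fix n assume n: "n \<in> {1..d}"
    then have "s n \<in> Sn n" "n \<ge> 1" using s(2) by auto
    then have "s n \<in> Qs n" using Sn_Qs[of n] by blast
    then show "s n \<in> Qs d" using n by (auto intro: Qs_mono)
  qed
  then show ?thesis unfolding s(1) by (rule Qs_sum)
qed

lemma Ssum_zero: "0 \<in> (Ssum d :: 'k::field R set)"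
proof -
  have "(0::'k R) = (\<Sum>n\<in>{1..d}. 0)" by simp
  then show ?thesis unfolding Ssum_def Sn_def using lprinc_zero by blast
qed

lemma Ssum_add: "u \<in> Ssum d \<Longrightarrow> v \<in> Ssum d \<Longrightarrow> u + v \<in> Ssum d"
proof -
  assume "u \<in> Ssum d" "v \<in> Ssum d"
  then obtain s t where s: "u = (\<Sum>n\<in>{1..d}. s n)" "\<forall>n\<in>{1..d}. s n \<in> Sn n"
     and t: "v = (\<Sum>n\<in>{1..d}. t n)" "\<forall>n\<in>{1..d}. t n \<in> Sn n" unfolding Ssum_def by blast
  have "u + v = (\<Sum>n\<in>{1..d}. s n + t n)" by (simp add: s t sum.distrib)
  moreover have "\<forall>n\<in>{1..d}. s n + t n \<in> Sn n" using s t by (simp add: Sn_def lprinc_add)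
  ultimately show ?thesis unfolding Ssum_def by blast
qed

lemma Ssum_mult: "u \<in> Ssum d \<Longrightarrow> jmult r u \<in> Ssum d"
proof -
  assume "u \<in> Ssum d"
  then obtain s where s: "u = (\<Sum>n\<in>{1..d}. s n)" "\<forall>n\<in>{1..d}. s n \<in> Sn n"
    unfolding Ssum_def by blast
  have "jmult r u = (\<Sum>n\<in>{1..d}. jmult r (s n))" by (simp add: s jmult_sum_right)
  moreover have "\<forall>n\<in>{1..d}. jmult r (s n) \<in> Sn n" using s by (simp add: Sn_def lprinc_mult)
  ultimately show ?thesis unfolding Ssum_def by blast
qed

lemma Ssum_sc: "u \<in> Ssum d \<Longrightarrow> sc c u \<in> Ssum d"
  by (simp add: sc_def Ssum_mult)

lemma Ssum_diff: "u \<in> Ssum d \<Longrightarrow> v \<in> Ssum d \<Longrightarrow> u - v \<in> Ssum d"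
  using Ssum_add[of u d "sc (-1) v"] Ssum_sc[of v d "-1"] by (simp add: sc_minus_one)

lemma Ssum_lideal: "lideal (Ssum d)"
  by (simp add: lideal_def Ssum_zero Ssum_add Ssum_mult)

lemma e_mult: "e i j = jmult (mon i j) (e j j)"
  by (simp add: e_single mon_def jmult_diff_right jmult_single_single bmul_def)

lemma e_Ssum: "j < d \<Longrightarrow> e i j \<in> Ssum d"
proof -
  assume j: "j < d"
  define s where "s = (\<lambda>n. if n = Suc j then e i j else (0::'a R))"
  have "(\<Sum>n\<in>{1..d}. s n) = e i j"
    unfolding s_def using j by (subst sum.delta) auto
  moreover have "s n \<in> Sn n" if "n \<in> {1..d}" for n
  proof (cases "n = Suc j")
    case True
    have "e i j \<in> lprinc (fn (Suc j))"
      unfolding lprinc_def fn_e[of "Suc j", simplified] using e_mult[of i j] by blast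
    then show ?thesis using True by (simp add: s_def Sn_def)
  next
    case False
    then show ?thesis by (simp add: s_def Sn_def lprinc_zero)
  qed
  ultimately show ?thesis unfolding Ssum_def by (smt (verit) mem_Collect_eq)
qed

lemma e_polyx: "jmult (e i k) (polyx p) = (\<Sum>m\<le>degree p. sc (coeff p m) (e i (k + m)))"
  unfolding polyx_def jmult_sum_right
  by (rule sum.cong) (simp_all add: e_single jmult_diff_left jmult_single_single bmul_def sc_diff)


lemma Iset_key:
  assumes "a \<in> Iset" "a \<noteq> 0"
  shows "\<exists>q\<in>Poly_Mapping.keys a. fst q \<ge> 1 \<and> snd q \<ge> 1"
proof (rule ccontr)
  assume H: "\<not> ?thesis"
  obtain q0 where q0: "q0 \<in> Poly_Mapping.keys a" using assms(2) keys_eq_empty by (metis all_not_in_conv)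
  have eq: "q = q0" if "q \<in> Poly_Mapping.keys a" "diag q = diag q0" for q
  proof -
    have "fst q = 0 \<or> snd q = 0" "fst q0 = 0 \<or> snd q0 = 0" using H that(1) q0 by force+
    then show ?thesis using that(2) unfolding diag_def by (cases q; cases q0) auto
  qed
  have "D (diag q0) a = (\<Sum>q\<in>Poly_Mapping.keys a. if q = q0 then Poly_Mapping.lookup a q else 0)"
    unfolding D_def by (rule sum.cong) (use eq in auto)
  also have "\<dots> = Poly_Mapping.lookup a q0" using q0 by (simp add: sum.delta)
  finally have "D (diag q0) a \<noteq> 0" using q0 by (simp add: in_keys_iff)
  then show False using assms(1) by (simp add: Iset_def)
qed

definition mu :: "'k::field R \<Rightarrow> nat" where
  "mu a = (\<Sum>q\<in>Poly_Mapping.keys a. fst q + snd q + 1)"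

lemma Iset_induct:
  assumes "a \<in> Iset" "P 0" "\<And>a b. P a \<Longrightarrow> P b \<Longrightarrow> P (a + b)" "\<And>c i j. P (sc c (e i j))"
  shows "P a"
  using assms(1)
proof (induction "mu a" arbitrary: a rule: less_induct)
  case less
  show ?case
  proof (cases "a = 0")
    case True then show ?thesis using assms(2) by simp
  next
    case False
    then obtain i j where ij: "(i,j) \<in> Poly_Mapping.keys a" "i \<ge> 1" "j \<ge> 1"
      using Iset_key[OF less.prems] by auto
    define c where "c = Poly_Mapping.lookup a (i,j)"
    define ee where "ee = (e (i - 1) (j - 1) :: 'a R)"
    define a' where "a' = a + sc c ee"
    have eeS: "ee = Poly_Mapping.single (i-1,j-1) 1 - Poly_Mapping.single (i,j) 1"
      using ij by (simp add: ee_def e_single)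
    have a'I: "a' \<in> Iset" unfolding a'_def ee_def
      using less.prems e_Qs by (auto intro!: Iset_add Iset_sc simp: Qs_def)
    have lk: "Poly_Mapping.lookup a' (i,j) = 0"
      using ij by (simp add: a'_def eeS lookup_add lookup_minus lookup_single c_def)
    have ksub: "Poly_Mapping.keys a' \<subseteq> insert (i-1,j-1) (Poly_Mapping.keys a - {(i,j)})"
    proof
      fix q assume q: "q \<in> Poly_Mapping.keys a'"
      then have "q \<noteq> (i,j)" using lk by (auto simp: in_keys_iff)
      moreover have "Poly_Mapping.lookup a' q \<noteq> 0" using q by (simp add: in_keys_iff)
      ultimately show "q \<in> insert (i-1,j-1) (Poly_Mapping.keys a - {(i,j)})"
        by (auto simp: a'_def eeS lookup_add lookup_minus lookup_single in_keys_iff when_def split: if_splits)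
    qed
    have "mu a' \<le> (\<Sum>q\<in>insert (i-1,j-1) (Poly_Mapping.keys a - {(i,j)}). fst q + snd q + 1)"
      unfolding mu_def by (rule sum_mono2[OF _ ksub]) auto
    also have "\<dots> \<le> (i - 1 + (j - 1) + 1) + (\<Sum>q\<in>Poly_Mapping.keys a - {(i,j)}. fst q + snd q + 1)"
      by (simp add: sum.insert_if)
    also have "\<dots> < (i + j + 1) + (\<Sum>q\<in>Poly_Mapping.keys a - {(i,j)}. fst q + snd q + 1)"
      using ij by simp
    also have "\<dots> = mu a"
      unfolding mu_def using ij(1) by (simp add: sum.remove)
    finally have "P a'" using less.hyps a'I by blast
    then have "P (a' + sc (-c) ee)" using assms(3,4) ee_def by blast
    moreover have "a' + sc (-c) ee = a"
      by (rule poly_mapping_eqI) (simp add: a'_def lookup_add algebra_simps)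
    ultimately show ?thesis by simp
  qed
qed


lemma lideal_sc: "lideal H \<Longrightarrow> a \<in> H \<Longrightarrow> sc c a \<in> H"
  by (simp add: lideal_def sc_def)
lemma lideal_add: "lideal H \<Longrightarrow> a \<in> H \<Longrightarrow> b \<in> H \<Longrightarrow> a + b \<in> H"
  by (simp add: lideal_def)
lemma lideal_mult: "lideal H \<Longrightarrow> a \<in> H \<Longrightarrow> jmult r a \<in> H"
  by (simp add: lideal_def)
lemma lideal_0: "lideal H \<Longrightarrow> 0 \<in> H"
  by (simp add: lideal_def)
lemma lideal_diff: "lideal H \<Longrightarrow> a \<in> H \<Longrightarrow> b \<in> H \<Longrightarrow> a - b \<in> H"
  using lideal_add[of H a "sc (-1) b"] lideal_sc[of H b "-1"] by (simp add: sc_minus_one)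
lemma lideal_sum: "lideal H \<Longrightarrow> (\<And>i. i \<in> I \<Longrightarrow> f i \<in> H) \<Longrightarrow> (\<Sum>i\<in>I. f i) \<in> H"
  by (induction I rule: infinite_finite_induct) (auto intro: lideal_add lideal_0)

lemma minpoly_dvd:
  assumes H: "lideal H" and p: "minpoly_in H p" and q: "polyx q \<in> H"
  shows "p dvd q"
proof -
  have p0: "p \<noteq> 0" and pH: "polyx p \<in> H" using p by (auto simp: minpoly_in_def)
  have "polyx (q mod p) = polyx q - jmult (polyx (q div p)) (polyx p)"
    by (metis polyx_mult polyx_diff div_mult_mod_eq add_diff_cancel_left')
  also have "\<dots> \<in> H" using H q pH by (intro lideal_diff lideal_mult)
  finally have m: "polyx (q mod p) \<in> H" .
  show ?thesis
  proof (rule ccontr)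
    assume "\<not> p dvd q"
    then have "q mod p \<noteq> 0" by (simp add: mod_eq_0_iff_dvd)
    then have "degree (q mod p) < degree p" using degree_mod_less[OF p0, of q] by auto
    moreover have "degree p \<le> degree (q mod p)" using p m \<open>q mod p \<noteq> 0\<close> by (auto simp: minpoly_in_def)
    ultimately show False by simp
  qed
qed

lemma minpoly_exists:
  assumes H: "lideal H" and q: "polyx q \<in> H" "q \<noteq> 0"
  shows "\<exists>p. minpoly_in H p"
proof -
  define n where "n = (LEAST n. \<exists>q. q \<noteq> 0 \<and> polyx q \<in> H \<and> degree q = n)"
  have "\<exists>q. q \<noteq> 0 \<and> polyx q \<in> H \<and> degree q = n"
    unfolding n_def by (rule LeastI[of _ "degree q"]) (use q in auto)
  then obtain q0 where q0: "q0 \<noteq> 0" "polyx q0 \<in> H" "degree q0 = n" by blast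
  have minimal: "n \<le> degree r" if "r \<noteq> 0" "polyx r \<in> H" for r
    unfolding n_def by (rule Least_le) (use that in auto)
  define p where "p = smult (inverse (lead_coeff q0)) q0"
  have "minpoly_in H p"
    unfolding minpoly_in_def p_def using q0 minimal
    by (auto simp: polyx_smult lideal_sc[OF H])
  then show ?thesis by blast
qed

lemma minpoly_unique:
  assumes "minpoly_in H p" "minpoly_in H q" "lideal H"
  shows "q = p"
proof (rule ccontr)
  assume ne: "q \<noteq> p"
  have p: "p \<noteq> 0" "lead_coeff p = 1" "polyx p \<in> H" "\<And>r. r \<noteq> 0 \<Longrightarrow> polyx r \<in> H \<Longrightarrow> degree p \<le> degree r"
    using assms(1) unfolding minpoly_in_def by blast+
  have q: "q \<noteq> 0" "lead_coeff q = 1" "polyx q \<in> H" "\<And>r. r \<noteq> 0 \<Longrightarrow> polyx r \<in> H \<Longrightarrow> degree q \<le> degree r"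
    using assms(2) unfolding minpoly_in_def by blast+
  have deq: "degree p = degree q" using p(4)[OF q(1,3)] q(4)[OF p(1,3)] by simp
  let ?r = "p - q"
  have r0: "?r \<noteq> 0" using ne by simp
  have rH: "polyx ?r \<in> H" using p(3) q(3) assms(3) by (simp add: polyx_diff lideal_diff)
  have "degree ?r \<le> degree p" using deq by (simp add: degree_diff_le)
  moreover have "coeff ?r (degree p) = 0" using p(2) q(2) deq by simp
  ultimately have "degree ?r < degree p"
    using r0 by (metis le_neq_implies_less leading_coeff_0_iff)
  moreover have "degree p \<le> degree ?r" using p(4)[OF r0 rH] .
  ultimately show False by simp
qed

lemma jmult_polyx_right:
  "jmult r (polyx p) = (\<Sum>m\<le>degree p. \<Sum>q\<in>Poly_Mapping.keys r.
      Poly_Mapping.single (fst q, snd q + m) (Poly_Mapping.lookup r q * coeff p m))"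
  unfolding polyx_def jmult_sum_right jmult_single_right
  by (intro sum.cong refl) (auto simp: bmul_def split: prod.splits)

lemma direct:
  fixes p :: "'k::field poly"
  assumes p0: "p \<noteq> 0" and u: "jmult r (polyx p) \<in> Qs (degree p)"
  shows "jmult r (polyx p) = 0"
proof -
  let ?d = "degree p" and ?u = "jmult r (polyx p)"
  define N where "N = rowb r + rowb ?u"
  have Nr: "\<forall>q\<in>Poly_Mapping.keys r. fst q \<le> N" using rowb[of _ r] by (force simp: N_def)
  have Nu: "\<forall>q\<in>Poly_Mapping.keys ?u. fst q \<le> N" using rowb[of _ ?u] by (force simp: N_def)
  have "\<forall>q\<in>Poly_Mapping.keys (jmult (mon 0 N) r). fst q = 0" using xN_row0[OF Nr] by blast
  then obtain w where w: "jmult (mon 0 N) r = polyx w" using row0_polyx by blast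
  have "jmult (mon 0 N) ?u = polyx (w * p)"
    by (simp add: jmult_assoc[symmetric] w polyx_mult)
  moreover have "jmult (mon 0 N) ?u = 0" using xN_Iset[OF Nu] u by (simp add: Qs_def)
  ultimately have "w * p = 0" by (simp add: polyx_eq_0)
  then have "w = 0" using p0 by simp
  then have xr: "jmult (mon 0 N) r = 0" using w by simp
  have rI: "r \<in> Iset"
    unfolding Iset_def using D_mon_left[OF Nr, of "_ + int N" 0] xr by simp
  show ?thesis
  proof (rule ccontr)
    assume "?u \<noteq> 0"
    then have r0: "r \<noteq> 0" by auto
    define J where "J = Max (snd ` Poly_Mapping.keys r)"
    have fin: "finite (snd ` Poly_Mapping.keys r)" by simp
    have kne: "Poly_Mapping.keys r \<noteq> {}" using r0 by simp
    have Jin: "J \<in> snd ` Poly_Mapping.keys r" unfolding J_def using fin kne by (intro Max_in) auto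
    have Jge: "snd q \<le> J" if "q \<in> Poly_Mapping.keys r" for q
      unfolding J_def using fin that by (intro Max_ge) auto
    obtain q1 where q1: "q1 \<in> Poly_Mapping.keys r" "fst q1 \<ge> 1" "snd q1 \<ge> 1" using Iset_key[OF rI r0] by blast
    have J1: "J \<ge> 1" using Jge[OF q1(1)] q1(3) by simp
    obtain i where iJ: "(i,J) \<in> Poly_Mapping.keys r" using Jin by force
    have inner: "(\<Sum>q\<in>Poly_Mapping.keys r. if (fst q, snd q + m) = (i, J + ?d) then Poly_Mapping.lookup r q * coeff p m else 0)
         = (if m = ?d then Poly_Mapping.lookup r (i,J) * coeff p m else 0)" if "m \<le> ?d" for m
    proof -
      have "(\<Sum>q\<in>Poly_Mapping.keys r. if (fst q, snd q + m) = (i, J + ?d) then Poly_Mapping.lookup r q * coeff p m else 0)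
          = (\<Sum>q\<in>Poly_Mapping.keys r. if m = ?d \<and> q = (i,J) then Poly_Mapping.lookup r q * coeff p m else 0)"
        by (rule sum.cong[OF refl]) (use Jge that in force)
      also have "\<dots> = (if m = ?d then Poly_Mapping.lookup r (i,J) * coeff p m else 0)"
        using iJ by (cases "m = ?d") (simp_all add: sum.delta)
      finally show ?thesis .
    qed
    have "Poly_Mapping.lookup ?u (i, J + ?d) = (\<Sum>m\<le>?d. if m = ?d then Poly_Mapping.lookup r (i,J) * coeff p m else 0)"
      unfolding jmult_polyx_right lookup_sum lookup_single when_def
      by (rule sum.cong[OF refl]) (simp add: inner[symmetric] eq_commute[of "(i, J + ?d)"])
    also have "\<dots> = Poly_Mapping.lookup r (i,J) * lead_coeff p" by simp
    also have "\<dots> \<noteq> 0" using iJ p0 by (simp add: in_keys_iff)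
    finally have "(i, J + ?d) \<in> Poly_Mapping.keys ?u" by (simp add: in_keys_iff)
    then have "J + ?d \<le> ?d" using u by (force simp: Qs_def)
    then show False using J1 by simp
  qed
qed



definition Yset :: "'k::field poly \<Rightarrow> 'k R set" where
  "Yset p = {t + jmult s (polyx p) | t s. t \<in> Ssum (degree p)}"

lemma Yset_zero: "0 \<in> Yset p"
proof -
  have "0 = 0 + jmult 0 (polyx p)" by simp
  then show ?thesis unfolding Yset_def using Ssum_zero by blast
qed

lemma Yset_add: "a \<in> Yset p \<Longrightarrow> b \<in> Yset p \<Longrightarrow> a + b \<in> Yset p"
proof -
  assume "a \<in> Yset p" "b \<in> Yset p"
  then obtain t s t' s' where "a = t + jmult s (polyx p)" "t \<in> Ssum (degree p)"
     "b = t' + jmult s' (polyx p)" "t' \<in> Ssum (degree p)" unfolding Yset_def by blast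
  then have "a + b = (t + t') + jmult (s + s') (polyx p)" "t + t' \<in> Ssum (degree p)"
    by (simp_all add: jmult_add_left Ssum_add)
  then show ?thesis unfolding Yset_def by blast
qed

lemma Yset_sc: "a \<in> Yset p \<Longrightarrow> sc c a \<in> Yset p"
proof -
  assume "a \<in> Yset p"
  then obtain t s where "a = t + jmult s (polyx p)" "t \<in> Ssum (degree p)" unfolding Yset_def by blast
  then have "sc c a = sc c t + jmult (sc c s) (polyx p)" "sc c t \<in> Ssum (degree p)"
    by (simp_all add: sc_add jmult_sc_left Ssum_sc)
  then show ?thesis unfolding Yset_def by blast
qed

lemma Yset_sum: "(\<And>i. i \<in> I \<Longrightarrow> f i \<in> Yset p) \<Longrightarrow> (\<Sum>i\<in>I. f i) \<in> Yset p"
  by (induction I rule: infinite_finite_induct) (auto intro: Yset_add Yset_zero)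

lemma Yset_diff: "a \<in> Yset p \<Longrightarrow> b \<in> Yset p \<Longrightarrow> a - b \<in> Yset p"
  using Yset_add[of a p "sc (-1) b"] Yset_sc[of b p "-1"] by (simp add: sc_minus_one)

lemma e_Yset:
  assumes lc: "lead_coeff p = 1"
  shows "e i j \<in> Yset p"
proof (induction j arbitrary: i rule: less_induct)
  case (less j)
  let ?d = "degree p"
  show ?case
  proof (cases "j < ?d")
    case True
    then have "e i j = e i j + jmult 0 (polyx p)" "e i j \<in> Ssum ?d" by (simp_all add: e_Ssum)
    then show ?thesis unfolding Yset_def by blast
  next
    case False
    define k where "k = j - ?d"
    have jk: "j = k + ?d" using False by (simp add: k_def)
    have "jmult (e i k) (polyx p) = (\<Sum>m<?d. sc (coeff p m) (e i (k + m))) + e i j"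
      unfolding e_polyx by (simp add: lessThan_Suc_atMost[symmetric] lc jk)
    then have eq: "e i j = jmult (e i k) (polyx p) - (\<Sum>m<?d. sc (coeff p m) (e i (k + m)))"
      by (simp add: algebra_simps)
    have "jmult (e i k) (polyx p) = 0 + jmult (e i k) (polyx p)" by simp
    then have "jmult (e i k) (polyx p) \<in> Yset p"
      unfolding Yset_def using Ssum_zero by blast
    moreover have "(\<Sum>m<?d. sc (coeff p m) (e i (k + m))) \<in> Yset p"
      by (rule Yset_sum, rule Yset_sc, rule less) (simp add: jk)
    ultimately show ?thesis unfolding eq by (rule Yset_diff)
  qed
qed

lemma Iset_Yset:
  assumes "lead_coeff p = 1" "a \<in> Iset"
  shows "a \<in> Yset p"
  using assms(2) by (rule Iset_induct) (auto intro: Yset_zero Yset_add Yset_sc e_Yset[OF assms(1)])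


lemma e_tel: "(\<Sum>i<N. e i i) = (mon 0 0 - mon N N :: 'k::field R)"
  unfolding e_def by (rule sum_lessThan_telescope'[where f = "\<lambda>n. mon n n"])

lemma e_ii_fact: "e i i = jmult (jmult (mon i 0) (e 0 0)) (mon 0 i)"
  by (simp add: e_single mon_def jmult_diff_left jmult_diff_right jmult_single_single bmul_def)

lemma mon_NN: "mon N N = jmult (mon N 0) (mon 0 N)"
  by (simp add: mon_def jmult_single_single bmul_def)

lemma Iset_decomp:
  assumes "h \<in> Iset" "\<forall>q\<in>Poly_Mapping.keys h. fst q \<le> N"
  shows "h = (\<Sum>i<N. jmult (mon i 0) (jmult (e 0 0) (jmult (mon 0 i) h)))"
proof -
  have "(\<Sum>i<N. jmult (mon i 0) (jmult (e 0 0) (jmult (mon 0 i) h))) = (\<Sum>i<N. jmult (e i i) h)"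
  proof (rule sum.cong[OF refl])
    fix i
    show "jmult (mon i 0) (jmult (e 0 0) (jmult (mon 0 i) h)) = jmult (e i i) h"
      by (subst e_ii_fact[of i]) (simp add: jmult_assoc)
  qed
  also have "\<dots> = jmult (mon 0 0 - mon N N) h"
    by (simp add: jmult_sum_left[symmetric] e_tel)
  also have "\<dots> = h - jmult (mon N 0) (jmult (mon 0 N) h)"
    by (simp add: jmult_diff_left mon_NN[of N] jmult_assoc)
  also have "\<dots> = h" using xN_Iset[OF assms(2,1)] by simp
  finally show ?thesis by simp
qed

lemma S1_simple:
  assumes "u \<in> lprinc (e 0 0)" "u \<noteq> (0::'k::field R)"
  shows "\<exists>r'. jmult r' u = e 0 0"
proof -
  obtain r where r: "u = jmult r (e 0 0)" using assms(1) unfolding lprinc_def by blast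
  define K where "K = {q \<in> Poly_Mapping.keys r. snd q = 0}"
  have finK: "finite K" by (simp add: K_def)
  define T where "T = (\<lambda>q. Poly_Mapping.single (fst q, 0) (Poly_Mapping.lookup r q)
       - Poly_Mapping.single (Suc (fst q), 1) (Poly_Mapping.lookup r q) :: 'k R)"
  have "u = (\<Sum>q\<in>Poly_Mapping.keys r. Poly_Mapping.single (bmul q (0,0)) (Poly_Mapping.lookup r q)
      - Poly_Mapping.single (bmul q (1,1)) (Poly_Mapping.lookup r q))"
    by (simp add: r e_single jmult_diff_right jmult_single_right sum_subtractf)
  also have "\<dots> = (\<Sum>q\<in>K. T q)"
    unfolding K_def T_def
    by (rule sum.mono_neutral_cong_right) (auto simp: bmul_def not_le split: prod.splits)
  finally have u: "u = (\<Sum>q\<in>K. T q)" .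
  have Kne: "K \<noteq> {}" using u assms(2) by auto
  define a where "a = Max (fst ` K)"
  have aK: "a \<in> fst ` K" unfolding a_def using finK Kne by (intro Max_in) auto
  have age: "fst q \<le> a" if "q \<in> K" for q unfolding a_def using finK that by (intro Max_ge) auto
  have a0K: "(a,0) \<in> K" using aK by (force simp: K_def)
  define c where "c = Poly_Mapping.lookup r (a,0)"
  have c0: "c \<noteq> 0" using a0K by (simp add: K_def c_def in_keys_iff)
  have step: "jmult (Poly_Mapping.single (0,a) (inverse c)) (T q) = (if q = (a,0) then e 0 0 else 0)"
    if "q \<in> K" for q
  proof -
    have q: "snd q = 0" "fst q \<le> a" using that age by (auto simp: K_def)
    show ?thesis
    proof (cases "q = (a,0)")
      case True
      then show ?thesis using c0 by (simp add: T_def c_def jmult_diff_right jmult_single_single bmul_def e_single)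
    next
      case False
      then have "fst q < a" using q by (cases q) auto
      then have "Suc (a - Suc (fst q)) = a - fst q" by simp
      then show ?thesis using False \<open>fst q < a\<close> by (simp add: T_def jmult_diff_right jmult_single_single bmul_def)
    qed
  qed
  have "jmult (Poly_Mapping.single (0,a) (inverse c)) u = (\<Sum>q\<in>K. if q = (a,0) then e 0 0 else 0)"
    unfolding u jmult_sum_right by (rule sum.cong[OF refl]) (rule step)
  also have "\<dots> = e 0 0" using a0K finK by (simp add: sum.delta)
  finally show ?thesis by blast
qed

lemma simple_g:
  assumes "g = jmult (mon i 0) (jmult (e 0 0) w)" "g \<noteq> (0::'k::field R)"
  shows "simple_lideal (lprinc g)"
  unfolding simple_lideal_def
proof (intro conjI allI impI)
  show "lideal (lprinc g)" by (rule lprinc_lideal)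
  show "lprinc g \<noteq> {0}" using lprinc_self[of g] assms(2) by blast
  fix T assume T: "lideal T \<and> T \<subseteq> lprinc g"
  show "T = {0} \<or> T = lprinc g"
  proof (cases "T = {0}")
    case False
    then obtain t where t: "t \<in> T" "t \<noteq> 0" using T lideal_0 by blast
    obtain r where r: "t = jmult r g" using t T unfolding lprinc_def by blast
    define u where "u = jmult (jmult r (mon i 0)) (e 0 0)"
    have tu: "t = jmult u w" by (simp add: r assms(1) u_def jmult_assoc)
    have u0: "u \<noteq> 0" using tu t(2) by auto
    have "u \<in> lprinc (e 0 0)" unfolding u_def lprinc_def by blast
    then obtain r' where r': "jmult r' u = e 0 0" using S1_simple u0 by blast
    have "jmult (jmult (mon i 0) r') t = g"
      by (simp add: tu assms(1) jmult_assoc[symmetric] ) (simp add: jmult_assoc r')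
    then have gT: "g \<in> T" using T t(1) by (metis lideal_mult)
    have "lprinc g \<subseteq> T" unfolding lprinc_def using T gT by (auto intro: lideal_mult)
    then show ?thesis using T by blast
  qed simp
qed



lemma lprinc_sub: "lideal H \<Longrightarrow> g \<in> H \<Longrightarrow> lprinc g \<subseteq> H"
  unfolding lprinc_def by (auto intro: lideal_mult)

lemma caseA:
  assumes H: "lideal H" and HI: "H \<subseteq> Iset"
  shows "semisimple H \<and> H \<subseteq> socle"
proof -
  define G where "G = (\<lambda>h i. jmult (mon i 0) (jmult (e 0 0) (jmult (mon 0 i) h)) :: 'a R)"
  have dec: "h = (\<Sum>i<rowb h. G h i)" if "h \<in> H" for h
    unfolding G_def using HI that rowb[of _ h] by (intro Iset_decomp) auto
  have GH: "G h i \<in> H" if "h \<in> H" for h i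
    unfolding G_def using H that by (intro lideal_mult)
  have "semisimple H"
    unfolding semisimple_def
  proof (intro conjI ballI)
    show "lideal H" by (rule H)
    fix h assume hH: "h \<in> H"
    show "\<exists>(n::nat) g S. (\<forall>i<n. simple_lideal (S i) \<and> S i \<subseteq> H \<and> g i \<in> S i) \<and> h = (\<Sum>i<n. g i)"
    proof (cases "h = 0")
      case True
      show ?thesis
        apply (rule exI[where x="0::nat"])
        using True by simp
    next
      case False
      then obtain i0 where i0: "G h i0 \<noteq> 0"
        using dec[OF hH] by (metis (no_types, lifting) sum.neutral)
      define S where "S = (\<lambda>i. if G h i \<noteq> 0 then lprinc (G h i) else lprinc (G h i0))"
      have "\<forall>i<rowb h. simple_lideal (S i) \<and> S i \<subseteq> H \<and> G h i \<in> S i"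
      proof (intro allI impI conjI)
        fix i
        show "simple_lideal (S i)"
          unfolding S_def using i0 by (auto intro!: simple_g simp: G_def)
        show "S i \<subseteq> H" unfolding S_def using lprinc_sub[OF H GH[OF hH]] by auto
        show "G h i \<in> S i" unfolding S_def by (auto simp: lprinc_self lprinc_zero)
      qed
      then show ?thesis using dec[OF hH] by blast
    qed
  qed
  moreover have "H \<subseteq> socle"
  proof
    fix h assume hH: "h \<in> H"
    show "h \<in> socle"
      unfolding socle_def
    proof (rule InterI)
      fix J :: "'a R set" assume "J \<in> {J. tideal J \<and> mon 0 0 - mon 1 1 \<in> J}"
      then have J: "lideal J" "\<forall>r. \<forall>a\<in>J. jmult a r \<in> J" "e 0 0 \<in> J"
        by (auto simp: tideal_def e_def)
      have "G h i \<in> J" for i unfolding G_def using J by (auto intro: lideal_mult)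
      then have "(\<Sum>i<rowb h. G h i) \<in> J" by (intro lideal_sum[OF J(1)])
      then show "h \<in> J" using dec[OF hH] by simp
    qed
  qed
  ultimately show ?thesis by blast
qed


lemma decompB:
  assumes H: "lideal H" and p: "minpoly_in H p" and hH: "h \<in> H"
  shows "\<exists>t s. t \<in> H \<and> t \<in> Ssum (degree p) \<and> h = t + jmult s (polyx p)"
proof -
  define N where "N = rowb h"
  have Nh: "\<forall>q\<in>Poly_Mapping.keys h. fst q \<le> N" using rowb[of _ h] by (simp add: N_def)
  define v where "v = jmult (mon 0 N) h"
  have vH: "v \<in> H" unfolding v_def using H hH by (rule lideal_mult)
  have "\<forall>q\<in>Poly_Mapping.keys v. fst q = 0" unfolding v_def using xN_row0[OF Nh] by blast
  then obtain q where q: "v = polyx q" using row0_polyx by blast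
  have "p dvd q" using minpoly_dvd[OF H p] vH q by simp
  then obtain w where w: "q = p * w" by (auto elim: dvdE)
  have mNN: "jmult (mon N N) h = jmult (jmult (mon N 0) (polyx w)) (polyx p)"
    by (simp add: mon_NN[of N] jmult_assoc v_def[symmetric] q w polyx_mult[symmetric] mult.commute)
  define h1 where "h1 = h - jmult (mon N N) h"
  have h1I: "h1 \<in> Iset"
    unfolding Iset_def h1_def by (simp add: D_diff D_mon_left[OF Nh])
  have lc: "lead_coeff p = 1" using p by (simp add: minpoly_in_def)
  obtain t s where ts: "h1 = t + jmult s (polyx p)" "t \<in> Ssum (degree p)"
    using Iset_Yset[OF lc h1I] unfolding Yset_def by blast
  have pH: "polyx p \<in> H" using p by (simp add: minpoly_in_def)
  have h1H: "h1 \<in> H" unfolding h1_def using H hH by (intro lideal_diff lideal_mult)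
  have tH: "t \<in> H"
  proof -
    have "t = h1 - jmult s (polyx p)" using ts by simp
    also have "\<dots> \<in> H" using H h1H pH by (intro lideal_diff lideal_mult)
    finally show ?thesis .
  qed
  have "h = t + jmult (s + jmult (mon N 0) (polyx w)) (polyx p)"
    using ts(1) by (simp add: jmult_add_left h1_def mNN algebra_simps)
  then show ?thesis using tH ts(2) by blast
qed


theorem theorem3:
  fixes H :: "((nat \<times> nat) \<Rightarrow>\<^sub>0 'k::field) set"
  assumes "lideal H"
  shows "(semisimple H \<and> H \<subseteq> socle) \<or>
         (\<exists>p. minpoly_in H p \<and> (\<forall>q. minpoly_in H q \<longrightarrow> q = p) \<and>
            (\<exists>!\<Sigma>. lideal \<Sigma> \<and> \<Sigma> \<subseteq> Ssum (degree p) \<and> idirect H \<Sigma> (lprinc (polyx p))))"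
proof (cases "H \<subseteq> Iset")
  case True
  then show ?thesis using caseA[OF assms] by blast
next
  case False
  note H = assms
  then obtain h0 k0 where h0: "h0 \<in> H" "D k0 h0 \<noteq> 0" using False by (auto simp: Iset_def)
  define N where "N = rowb h0"
  have Nh: "\<forall>q\<in>Poly_Mapping.keys h0. fst q \<le> N" using rowb[of _ h0] by (simp add: N_def)
  define v where "v = jmult (mon 0 N) h0"
  have vH: "v \<in> H" unfolding v_def using H h0(1) by (rule lideal_mult)
  have "\<forall>q\<in>Poly_Mapping.keys v. fst q = 0" unfolding v_def using xN_row0[OF Nh] by blast
  then obtain q where q: "v = polyx q" using row0_polyx by blast
  have "D (k0 + int N) v = D k0 h0" unfolding v_def using D_mon_left[OF Nh, of "k0 + int N" 0] by simp
  then have "v \<noteq> 0" using h0(2) by auto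
  then have q0: "q \<noteq> 0" using q by auto
  obtain p where p: "minpoly_in H p" using minpoly_exists[OF H] vH q q0 by blast
  have p0: "p \<noteq> 0" and pH: "polyx p \<in> H" using p by (auto simp: minpoly_in_def)
  let ?d = "degree p" and ?P = "lprinc (polyx p)"
  define Sig where "Sig = H \<inter> Ssum ?d"
  have dir: "b = 0" if b1: "b \<in> ?P" and b2: "b \<in> Ssum ?d" for b
  proof -
    obtain r where r: "b = jmult r (polyx p)" using b1 unfolding lprinc_def by blast
    then have "jmult r (polyx p) \<in> Qs ?d" using b2 Ssum_Qs by simp
    then show ?thesis using direct[OF p0] r by simp
  qed
  have PH: "?P \<subseteq> H" using H pH by (rule lprinc_sub)
  have P1: "lideal Sig \<and> Sig \<subseteq> Ssum ?d \<and> idirect H Sig ?P"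
  proof (intro conjI)
    show "lideal Sig" unfolding Sig_def lideal_def
      using H Ssum_zero Ssum_add Ssum_mult by (auto intro: lideal_0 lideal_add lideal_mult)
    show "Sig \<subseteq> Ssum ?d" by (simp add: Sig_def)
    show "idirect H Sig ?P"
      unfolding idirect_def
    proof (intro conjI)
      show "H = {a + b |a b. a \<in> Sig \<and> b \<in> ?P}"
      proof (intro set_eqI iffI)
        fix h assume "h \<in> H"
        then obtain t s where "t \<in> H" "t \<in> Ssum ?d" "h = t + jmult s (polyx p)"
          using decompB[OF H p] by blast
        then show "h \<in> {a + b |a b. a \<in> Sig \<and> b \<in> ?P}" unfolding Sig_def lprinc_def by blast
      next
        fix h assume "h \<in> {a + b |a b. a \<in> Sig \<and> b \<in> ?P}"
        then show "h \<in> H" unfolding Sig_def using PH H by (auto intro: lideal_add)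
      qed
      show "Sig \<inter> ?P = {0}"
        using dir lprinc_zero Ssum_zero lideal_0[OF H] by (auto simp: Sig_def)
    qed
  qed
  have uniq: "S' = Sig" if S': "lideal S' \<and> S' \<subseteq> Ssum ?d \<and> idirect H S' ?P" for S'
  proof (intro set_eqI iffI)
    have HS: "H = {a + b |a b. a \<in> S' \<and> b \<in> ?P}" using S' by (simp add: idirect_def)
    fix x
    {
      assume "x \<in> S'"
      then have "x + 0 \<in> H" using lprinc_zero HS by blast
      then show "x \<in> Sig" using S' \<open>x \<in> S'\<close> by (auto simp: Sig_def)
    }
    {
      assume "x \<in> Sig"
      then have xH: "x \<in> H" and xS: "x \<in> Ssum ?d" by (auto simp: Sig_def)
      then obtain a b where ab: "x = a + b" "a \<in> S'" "b \<in> ?P" using HS by blast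
      have "b = x - a" using ab by simp
      also have "\<dots> \<in> Ssum ?d" using xS ab(2) S' by (intro Ssum_diff) auto
      finally have "b = 0" using dir ab(3) by blast
      then show "x \<in> S'" using ab by simp
    }
  qed
  have "minpoly_in H p \<and> (\<forall>q. minpoly_in H q \<longrightarrow> q = p) \<and>
      (\<exists>!\<Sigma>. lideal \<Sigma> \<and> \<Sigma> \<subseteq> Ssum (degree p) \<and> idirect H \<Sigma> (lprinc (polyx p)))"
  proof (intro conjI allI impI)
    show "minpoly_in H p" by (rule p)
    show "q = p" if "minpoly_in H q" for q using minpoly_unique[OF p that H] .
    show "\<exists>!\<Sigma>. lideal \<Sigma> \<and> \<Sigma> \<subseteq> Ssum (degree p) \<and> idirect H \<Sigma> (lprinc (polyx p))"
      by (rule ex1I[of _ Sig]) (use P1 uniq in blast)+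
  qed
  then show ?thesis by blast
qed



end
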